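(* In the setting of the context (CFSR scheme: flux reconstruction with chain-rule flux derivatives), let $\mathcal{E}_j=(\Phi_{j+1/2}-\Phi_{j-1/2})/h$ evaluated on exact nodal values. If $\kappa_3=0$, then as $h\to0$ with derivatives at $x_j$, $$\mathcal{E}_j=\frac{\partial f}{\partial x}+\frac{3\theta-1}{12}\frac{\partial^3 f}{\partial x^3}h^2-\frac{\kappa-1}{8}\left[\frac{\partial D}{\partial x}\frac{\partial^3 u}{\partial x^3}+D(u(x_j))\frac{\partial^4 u}{\partial x^4}\right]h^3+O(h^4),$$ where $f$ denotes $f(u(x))$ and $\partial D/\partial x=\frac{d}{dx}D(u(x))$; thus $\theta=1/3$ gives third-order accuracy. Moreover, if $\theta=1/3$ and $\kappa_3=\kappa-1$, then $\mathcal{E}_j=\frac{\partial f}{\partial x}+O(h^4)$.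
   Context: Let $h>0$, uniform grid $x_i=ih$, $i\in\mathbb{Z}$. Let $u$ be a smooth real function of $x$, $u_i=u(x_i)$; let $f$ (flux) and $D$ (dissipation coefficient) be smooth real functions of one variable; $f_i=f(u_i)$. Define successive central differences $(u_x)_i=(u_{i+1}-u_{i-1})/(2h)$, $(u_{xx})_i=((u_x)_{i+1}-(u_x)_{i-1})/(2h)$. For the face $i+1/2$ with $j=i$, $k=i+1$, let $T_j=\frac h4((u_x)_k-(u_x)_j)-\frac{h^2}{4}(u_{xx})_j$, $T_k=\frac h4((u_x)_k-(u_x)_j)-\frac{h^2}{4}(u_{xx})_k$, and reconstructed states (parameters $\kappa,\kappa_3$) $u_L=\kappa\frac{u_j+u_k}{2}+(1-\kappa)[u_j+\frac h2(u_x)_j]+\kappa_3T_j$, $u_R=\kappa\frac{u_j+u_k}{2}+(1-\kappa)[u_k-\frac h2(u_x)_k]+\kappa_3T_k$. Reconstructed fluxes with parameter $\theta$ and chain-rule derivatives: $f_L=\theta\frac{f_j+f_k}{2}+(1-\theta)[f_j+f'(u_j)\frac h2(u_x)_j]$, $f_R=\theta\frac{f_j+f_k}{2}+(1-\theta)[f_k-f'(u_k)\frac h2(u_x)_k]$. Numerical flux: $\Phi_{i+1/2}=\frac12(f_L+f_R)-\frac12D_{i+1/2}(u_R-u_L)$, with $D_{i+1/2}=\bar D(u_i,u_{i+1})$ for a smooth symmetric $\bar D$ with $\bar D(v,v)=D(v)$. *)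

theory Defs
  imports "HOL-Analysis.Analysis" "HOL-Library.Landau_Symbols"
begin

definition smooth1 :: "(real \<Rightarrow> real) \<Rightarrow> bool" where
  "smooth1 g \<longleftrightarrow> (\<forall>n x. (deriv ^^ n) g differentiable (at x))"

text \<open>Smooth (C-infinity) real function of two real variables: it lies in a family of
  jointly continuous functions that is closed under taking both partial derivatives
  (all partial derivatives of all orders exist everywhere and are continuous).\<close>
definition smooth2 :: "(real \<Rightarrow> real \<Rightarrow> real) \<Rightarrow> bool" where
  "smooth2 g \<longleftrightarrow> (\<exists>S. g \<in> S \<and> (\<forall>k\<in>S.
      continuous_on UNIV (\<lambda>p. k (fst p) (snd p)) \<and>
      (\<forall>a b. (\<lambda>s. k s b) differentiable (at a) \<and> (\<lambda>t. k a t) differentiable (at b)) \<and>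
      (\<lambda>a b. deriv (\<lambda>s. k s b) a) \<in> S \<and> (\<lambda>a b. deriv (\<lambda>t. k a t) b) \<in> S))"

definition ux :: "(int \<Rightarrow> real) \<Rightarrow> real \<Rightarrow> int \<Rightarrow> real" where
  "ux U h i = (U (i+1) - U (i-1)) / (2*h)"

definition uxx :: "(int \<Rightarrow> real) \<Rightarrow> real \<Rightarrow> int \<Rightarrow> real" where
  "uxx U h i = (ux U h (i+1) - ux U h (i-1)) / (2*h)"

text \<open>Face i+1/2: j = i, k = i+1.\<close>
definition TL :: "(int \<Rightarrow> real) \<Rightarrow> real \<Rightarrow> int \<Rightarrow> real" where
  "TL U h i = h/4 * (ux U h (i+1) - ux U h i) - h^2/4 * uxx U h i"

definition TR :: "(int \<Rightarrow> real) \<Rightarrow> real \<Rightarrow> int \<Rightarrow> real" where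
  "TR U h i = h/4 * (ux U h (i+1) - ux U h i) - h^2/4 * uxx U h (i+1)"

definition uL :: "real \<Rightarrow> real \<Rightarrow> (int \<Rightarrow> real) \<Rightarrow> real \<Rightarrow> int \<Rightarrow> real" where
  "uL \<kappa> \<kappa>3 U h i = \<kappa> * (U i + U (i+1)) / 2 + (1 - \<kappa>) * (U i + h/2 * ux U h i) + \<kappa>3 * TL U h i"

definition uR :: "real \<Rightarrow> real \<Rightarrow> (int \<Rightarrow> real) \<Rightarrow> real \<Rightarrow> int \<Rightarrow> real" where
  "uR \<kappa> \<kappa>3 U h i = \<kappa> * (U i + U (i+1)) / 2 + (1 - \<kappa>) * (U (i+1) - h/2 * ux U h (i+1)) + \<kappa>3 * TR U h i"

definition fL :: "real \<Rightarrow> (real \<Rightarrow> real) \<Rightarrow> (int \<Rightarrow> real) \<Rightarrow> real \<Rightarrow> int \<Rightarrow> real" where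
  "fL \<theta> f U h i = \<theta> * (f (U i) + f (U (i+1))) / 2
      + (1 - \<theta>) * (f (U i) + deriv f (U i) * (h/2) * ux U h i)"

definition fR :: "real \<Rightarrow> (real \<Rightarrow> real) \<Rightarrow> (int \<Rightarrow> real) \<Rightarrow> real \<Rightarrow> int \<Rightarrow> real" where
  "fR \<theta> f U h i = \<theta> * (f (U i) + f (U (i+1))) / 2
      + (1 - \<theta>) * (f (U (i+1)) - deriv f (U (i+1)) * (h/2) * ux U h (i+1))"

text \<open>Numerical flux at face i+1/2.\<close>
definition Phi :: "real \<Rightarrow> real \<Rightarrow> real \<Rightarrow> (real \<Rightarrow> real) \<Rightarrow> (real \<Rightarrow> real \<Rightarrow> real)
    \<Rightarrow> (int \<Rightarrow> real) \<Rightarrow> real \<Rightarrow> int \<Rightarrow> real" where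
  "Phi \<kappa> \<kappa>3 \<theta> f Dbar U h i =
     (fL \<theta> f U h i + fR \<theta> f U h i) / 2
     - Dbar (U i) (U (i+1)) * (uR \<kappa> \<kappa>3 U h i - uL \<kappa> \<kappa>3 U h i) / 2"

definition CFSR_err :: "real \<Rightarrow> real \<Rightarrow> real \<Rightarrow> (real \<Rightarrow> real) \<Rightarrow> (real \<Rightarrow> real \<Rightarrow> real)
    \<Rightarrow> (real \<Rightarrow> real) \<Rightarrow> real \<Rightarrow> real \<Rightarrow> real" where
  "CFSR_err \<kappa> \<kappa>3 \<theta> f Dbar u x h =
     (let U = (\<lambda>i::int. u (x + of_int i * h)) in
      (Phi \<kappa> \<kappa>3 \<theta> f Dbar U h 0 - Phi \<kappa> \<kappa>3 \<theta> f Dbar U h (-1)) / h)"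

end

theory Submission
  imports Defs
begin

fun Ck :: "nat \<Rightarrow> (real \<Rightarrow> real) \<Rightarrow> bool" where
  "Ck 0 g = (\<forall>x. g differentiable (at x))"
| "Ck (Suc m) g = ((\<forall>x. g differentiable (at x)) \<and> Ck m (deriv g))"

lemma all_le_Suc: "(\<forall>j\<le>Suc m. P j) \<longleftrightarrow> P 0 \<and> (\<forall>j\<le>m. P (Suc j))"
  by (metis Suc_le_mono le0 not0_implies_Suc)

lemma Ck_iff: "Ck m g \<longleftrightarrow> (\<forall>j\<le>m. \<forall>x. (deriv^^j) g differentiable (at x))"
proof (induction m arbitrary: g)
  case 0 then show ?case by simp
next
  case (Suc m)
  show ?case unfolding all_le_Suc using Suc.IH[of "deriv g"]
    by (simp add: funpow_Suc_right del: funpow.simps)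
qed

lemma smooth1_Ck: "smooth1 g \<longleftrightarrow> (\<forall>m. Ck m g)"
  unfolding smooth1_def Ck_iff by blast

lemma Ck_differentiable: "Ck m g \<Longrightarrow> g differentiable (at x)"
  by (cases m) auto

lemma Ck_Suc_imp: "Ck (Suc m) g \<Longrightarrow> Ck m g"
  by (induction m arbitrary: g) auto

lemma Ck_DERIV: "Ck m g \<Longrightarrow> DERIV g x :> deriv g x"
  using Ck_differentiable DERIV_deriv_iff_real_differentiable by blast

lemma Ck_add: "Ck m a \<Longrightarrow> Ck m b \<Longrightarrow> Ck m (\<lambda>x. a x + b x)"
proof (induction m arbitrary: a b)
  case 0 then show ?case by auto
next
  case (Suc m)
  have d: "deriv (\<lambda>x. a x + b x) = (\<lambda>x. deriv a x + deriv b x)"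
    by (rule ext, rule DERIV_imp_deriv, intro derivative_intros Ck_DERIV[OF Suc.prems(1)] Ck_DERIV[OF Suc.prems(2)])
  show ?case using Suc by (auto simp: d)
qed

lemma Ck_mult: "Ck m a \<Longrightarrow> Ck m b \<Longrightarrow> Ck m (\<lambda>x. a x * b x)"
proof (induction m arbitrary: a b)
  case 0 then show ?case by auto
next
  case (Suc m)
  have d: "deriv (\<lambda>x. a x * b x) = (\<lambda>x. deriv a x * b x + a x * deriv b x)"
    by (rule ext, rule DERIV_imp_deriv, auto intro!: derivative_eq_intros Ck_DERIV[OF Suc.prems(1)] Ck_DERIV[OF Suc.prems(2)])
  have "Ck m (\<lambda>x. deriv a x * b x)" using Suc Ck_Suc_imp by auto
  moreover have "Ck m (\<lambda>x. a x * deriv b x)" using Suc Ck_Suc_imp by auto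
  ultimately show ?case using Suc by (auto simp: d intro: Ck_add)
qed

lemma Ck_comp: "Ck m f \<Longrightarrow> Ck m g \<Longrightarrow> Ck m (\<lambda>x. f (g x))"
proof (induction m arbitrary: f g)
  case 0 then show ?case by (auto intro: differentiable_chain_at[unfolded o_def])
next
  case (Suc m)
  have d: "deriv (\<lambda>x. f (g x)) = (\<lambda>x. deriv f (g x) * deriv g x)"
    by (rule ext, rule DERIV_imp_deriv, rule DERIV_chain2, auto intro!: Ck_DERIV[OF Suc.prems(1)] Ck_DERIV[OF Suc.prems(2)])
  have "Ck m (\<lambda>x. deriv f (g x))" using Suc Ck_Suc_imp by auto
  then have "Ck m (\<lambda>x. deriv f (g x) * deriv g x)" using Suc by (auto intro: Ck_mult)
  then show ?case using Suc by (auto simp: d intro: differentiable_chain_at[unfolded o_def])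
qed

lemma smooth1_mult: "smooth1 a \<Longrightarrow> smooth1 b \<Longrightarrow> smooth1 (\<lambda>x. a x * b x)"
  by (simp add: smooth1_Ck Ck_mult)
lemma smooth1_comp: "smooth1 a \<Longrightarrow> smooth1 b \<Longrightarrow> smooth1 (\<lambda>x. a (b x))"
  by (simp add: smooth1_Ck Ck_comp)
lemma smooth1_deriv: "smooth1 a \<Longrightarrow> smooth1 (deriv a)"
  by (metis Ck.simps(2) smooth1_Ck)
lemma smooth1_DERIV: "smooth1 a \<Longrightarrow> DERIV a x :> deriv a x"
  using Ck_DERIV smooth1_Ck by blast
lemma smooth1_DERIVn: "smooth1 a \<Longrightarrow> DERIV ((deriv^^n) a) x :> (deriv^^(Suc n)) a x"
  using smooth1_def DERIV_deriv_iff_real_differentiable by fastforce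
lemma smooth1_contn: "smooth1 a \<Longrightarrow> continuous_on S ((deriv^^n) a)"
  by (meson DERIV_isCont continuous_at_imp_continuous_on smooth1_DERIVn)

definition Ob :: "nat \<Rightarrow> (real \<Rightarrow> real) \<Rightarrow> bool" where
  "Ob n r \<longleftrightarrow> (\<exists>C \<delta>. 0 < \<delta> \<and> (\<forall>h. 0 < h \<and> h < \<delta> \<longrightarrow> \<bar>r h\<bar> \<le> C * h^n))"

lemma ObI: "0 < \<delta> \<Longrightarrow> (\<And>h. 0 < h \<Longrightarrow> h < \<delta> \<Longrightarrow> \<bar>r h\<bar> \<le> C * h^n) \<Longrightarrow> Ob n r"
  unfolding Ob_def by blast

lemma ObE: assumes "Ob n r"
  obtains C \<delta> where "0 < \<delta>" "0 \<le> C" "\<And>h. 0 < h \<Longrightarrow> h < \<delta> \<Longrightarrow> \<bar>r h\<bar> \<le> C * h^n"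
proof -
  obtain C \<delta> where d: "0 < \<delta>" and C: "\<And>h. 0 < h \<Longrightarrow> h < \<delta> \<Longrightarrow> \<bar>r h\<bar> \<le> C * h^n"
    using assms unfolding Ob_def by blast
  have "0 \<le> C"
  proof -
    have "\<bar>r (\<delta>/2)\<bar> \<le> C * (\<delta>/2)^n" using C d by auto
    then have "0 \<le> C * (\<delta>/2)^n" by (meson abs_ge_zero order_trans)
    moreover have p: "0 < (\<delta>/2)^n" using d by simp
    ultimately show ?thesis by (metis zero_le_mult_iff not_le)
  qed
  then show ?thesis using that d C by blast
qed

lemma Ob_add: assumes "Ob n a" "Ob n b" shows "Ob n (\<lambda>h. a h + b h)"
proof -
  obtain C1 d1 where 1: "0 < d1" "\<And>h. 0 < h \<Longrightarrow> h < d1 \<Longrightarrow> \<bar>a h\<bar> \<le> C1 * h^n" using ObE[OF assms(1)] by metis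
  obtain C2 d2 where 2: "0 < d2" "\<And>h. 0 < h \<Longrightarrow> h < d2 \<Longrightarrow> \<bar>b h\<bar> \<le> C2 * h^n" using ObE[OF assms(2)] by metis
  show ?thesis
  proof (rule ObI[of "min d1 d2" _ "C1 + C2"])
    fix h :: real assume "0 < h" "h < min d1 d2"
    then have "\<bar>a h\<bar> \<le> C1 * h^n" "\<bar>b h\<bar> \<le> C2 * h^n" using 1 2 by auto
    then show "\<bar>a h + b h\<bar> \<le> (C1 + C2) * h^n" by (simp add: distrib_right abs_triangle_ineq order_trans[OF abs_triangle_ineq])
  qed (use 1 2 in auto)
qed

lemma Ob_cmult: assumes "Ob n a" shows "Ob n (\<lambda>h. c * a h)"
proof -
  obtain C d where 1: "0 < d" "\<And>h. 0 < h \<Longrightarrow> h < d \<Longrightarrow> \<bar>a h\<bar> \<le> C * h^n" using ObE[OF assms(1)] by metis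
  show ?thesis
  proof (rule ObI[of d _ "\<bar>c\<bar> * C"])
    fix h :: real assume "0 < h" "h < d"
    then have "\<bar>a h\<bar> \<le> C * h^n" using 1 by auto
    then show "\<bar>c * a h\<bar> \<le> (\<bar>c\<bar> * C) * h^n" by (simp add: abs_mult mult.assoc mult_left_mono)
  qed (use 1 in auto)
qed

lemma Ob_uminus: "Ob n a \<Longrightarrow> Ob n (\<lambda>h. - a h)"
  using Ob_cmult[of n a "-1"] by simp

lemma Ob_diff: "Ob n a \<Longrightarrow> Ob n b \<Longrightarrow> Ob n (\<lambda>h. a h - b h)"
  using Ob_add[of n a "\<lambda>h. - b h"] Ob_uminus[of n b] by simp

lemma Ob_mult: assumes "Ob m a" "Ob n b" shows "Ob (m + n) (\<lambda>h. a h * b h)"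
proof -
  obtain C1 d1 where 1: "0 < d1" "0 \<le> C1" "\<And>h. 0 < h \<Longrightarrow> h < d1 \<Longrightarrow> \<bar>a h\<bar> \<le> C1 * h^m" using ObE[OF assms(1)] by metis
  obtain C2 d2 where 2: "0 < d2" "0 \<le> C2" "\<And>h. 0 < h \<Longrightarrow> h < d2 \<Longrightarrow> \<bar>b h\<bar> \<le> C2 * h^n" using ObE[OF assms(2)] by metis
  show ?thesis
  proof (rule ObI[of "min d1 d2" _ "C1 * C2"])
    fix h :: real assume h: "0 < h" "h < min d1 d2"
    then have "\<bar>a h\<bar> \<le> C1 * h^m" "\<bar>b h\<bar> \<le> C2 * h^n" using 1 2 by auto
    then have "\<bar>a h\<bar> * \<bar>b h\<bar> \<le> (C1 * h^m) * (C2 * h^n)"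
      by (intro mult_mono) (use 1 2 h in auto)
    then show "\<bar>a h * b h\<bar> \<le> (C1 * C2) * h^(m+n)" by (simp add: abs_mult power_add algebra_simps)
  qed (use 1 2 in auto)
qed

lemma Ob_mono: assumes "Ob n a" "m \<le> n" shows "Ob m a"
proof -
  obtain C d where 1: "0 < d" "0 \<le> C" "\<And>h. 0 < h \<Longrightarrow> h < d \<Longrightarrow> \<bar>a h\<bar> \<le> C * h^n" using ObE[OF assms(1)] by metis
  show ?thesis
  proof (rule ObI[of "min d 1" _ C])
    fix h :: real assume h: "0 < h" "h < min d 1"
    then have "\<bar>a h\<bar> \<le> C * h^n" using 1 by auto
    also have "\<dots> \<le> C * h^m" using h assms(2) 1 by (intro mult_left_mono power_decreasing) auto
    finally show "\<bar>a h\<bar> \<le> C * h^m" .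
  qed (use 1 in auto)
qed

lemma Ob_cong: "Ob n a \<Longrightarrow> (\<And>h. 0 < h \<Longrightarrow> b h = a h) \<Longrightarrow> Ob n b"
  unfolding Ob_def by (metis (no_types, lifting))

lemma Ob_pow: "Ob n (\<lambda>h. h^n)"
  by (rule ObI[of 1 _ 1]) auto

lemma Ob_cont: assumes "isCont q 0" shows "Ob 0 q"
proof -
  obtain d where d: "0 < d" "\<And>y. \<bar>y - 0\<bar> < d \<Longrightarrow> \<bar>q y - q 0\<bar> < 1"
    using assms unfolding continuous_at_eps_delta dist_real_def by (metis zero_less_one)
  show ?thesis
  proof (rule ObI[of d _ "\<bar>q 0\<bar> + 1"])
    fix h :: real assume "0 < h" "h < d"
    then have "\<bar>q h - q 0\<bar> < 1" using d by auto
    then show "\<bar>q h\<bar> \<le> (\<bar>q 0\<bar> + 1) * h^0" by simp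
  qed (use d in auto)
qed

lemma Ob_div: assumes "Ob (Suc n) a" shows "Ob n (\<lambda>h. a h / h)"
proof -
  obtain C d where 1: "0 < d" "0 \<le> C" "\<And>h. 0 < h \<Longrightarrow> h < d \<Longrightarrow> \<bar>a h\<bar> \<le> C * h^Suc n" using ObE[OF assms(1)] by metis
  show ?thesis
  proof (rule ObI[of d _ C])
    fix h :: real assume h: "0 < h" "h < d"
    then have "\<bar>a h\<bar> \<le> C * h^Suc n" using 1 by auto
    then show "\<bar>a h / h\<bar> \<le> C * h^n" using h by (simp add: divide_le_eq mult.commute mult.left_commute)
  qed (use 1 in auto)
qed

lemma Ob_div5: "Ob 5 a \<Longrightarrow> Ob 4 (\<lambda>h. a h / h)"
  using Ob_div[of 4 a] by simp

lemma Ob_bigo: assumes "Ob n a" shows "a \<in> O[at_right 0](\<lambda>h. h^n)"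
proof -
  obtain C d where 1: "0 < d" "0 \<le> C" "\<And>h. 0 < h \<Longrightarrow> h < d \<Longrightarrow> \<bar>a h\<bar> \<le> C * h^n" using ObE[OF assms(1)] by metis
  have "eventually (\<lambda>h. norm (a h) \<le> C * norm (h^n)) (at_right (0::real))"
    unfolding eventually_at_right_field using 1 by (intro exI[of _ d]) (auto simp: abs_mult)
  then show ?thesis by (rule bigoI)
qed

lemma taylor_Ob:
  assumes g: "smooth1 g" and n: "0 < n"
  shows "Ob n (\<lambda>h. g (x + c*h) - (\<Sum>k<n. (deriv^^k) g x / fact k * (c*h)^k))"
proof -
  let ?I = "{x - \<bar>c\<bar> .. x + \<bar>c\<bar>}"
  have "compact ((deriv^^n) g ` ?I)"
    by (intro compact_continuous_image smooth1_contn g) auto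
  then obtain M where M: "M > 0" "\<And>t. t \<in> ?I \<Longrightarrow> \<bar>(deriv^^n) g t\<bar> \<le> M"
    using compact_imp_bounded bounded_pos by (metis image_eqI real_norm_def)
  have "\<forall>h. 0 < h \<and> h < 1 \<longrightarrow> \<bar>g (x + c*h) - (\<Sum>k<n. (deriv^^k) g x / fact k * (c*h)^k)\<bar> \<le> M / fact n * \<bar>c\<bar>^n * h^n"
  proof (intro allI impI)
    fix h :: real assume h: "0 < h \<and> h < 1"
    have ch: "\<bar>c*h\<bar> \<le> \<bar>c\<bar>" using h by (simp add: abs_mult mult_left_le)
    show "\<bar>g (x + c*h) - (\<Sum>k<n. (deriv^^k) g x / fact k * (c*h)^k)\<bar> \<le> M / fact n * \<bar>c\<bar>^n * h^n"
    proof (cases "c = 0")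
      case True
      obtain n' where "n = Suc n'" using n not0_implies_Suc by blast
      then show ?thesis using True by (simp add: sum.lessThan_Suc_shift del: sum.lessThan_Suc)
    next
      case False
      have "\<exists>t. (if x + c*h < x then x + c*h < t \<and> t < x else x < t \<and> t < x + c*h) \<and>
          g (x + c*h) = (\<Sum>m<n. ((deriv^^m) g x / fact m) * (x + c*h - x)^m) + ((deriv^^n) g t / fact n) * (x + c*h - x)^n"
        apply (rule Taylor[of n "\<lambda>m. (deriv^^m) g" g "x - \<bar>c\<bar>" "x + \<bar>c\<bar>" x "x + c*h"])
        using n False h ch by (auto intro: smooth1_DERIVn[OF g, simplified])
      then obtain t where tb: "(if x + c*h < x then x + c*h < t \<and> t < x else x < t \<and> t < x + c*h)"
        and eq0: "g (x + c*h) = (\<Sum>m<n. ((deriv^^m) g x / fact m) * (x + c*h - x)^m) + ((deriv^^n) g t / fact n) * (x + c*h - x)^n"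
        by blast
      have t: "t \<in> ?I" using tb ch by (auto split: if_splits)
      have eq: "g (x + c*h) = (\<Sum>m<n. ((deriv^^m) g x / fact m) * (c*h)^m) + ((deriv^^n) g t / fact n) * (c*h)^n"
        using eq0 by simp
      have "\<bar>g (x + c*h) - (\<Sum>k<n. (deriv^^k) g x / fact k * (c*h)^k)\<bar> = \<bar>(deriv^^n) g t\<bar> / fact n * \<bar>c\<bar>^n * h^n"
        using eq h by (simp add: abs_mult power_abs power_mult_distrib)
      also have "\<dots> \<le> M / fact n * \<bar>c\<bar>^n * h^n"
        using M(2)[OF t] h by (intro mult_right_mono divide_right_mono) auto
      finally show ?thesis .
    qed
  qed
  then show ?thesis unfolding Ob_def using zero_less_one by blast
qed

definition WpF :: "real \<Rightarrow> real \<Rightarrow> real \<Rightarrow> real \<Rightarrow> real \<Rightarrow> real \<Rightarrow> real \<Rightarrow> real \<Rightarrow> real \<Rightarrow> real" where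
  "WpF \<kappa> \<kappa>3 m3 m2 m1 z p1 p2 p3 = (1-\<kappa>)/4*(3*p1 - 3*z + m1 - p2)
      - \<kappa>3/16*((p3 - 2*p1 + m1) - (p2 - 2*z + m2))"
definition WmF :: "real \<Rightarrow> real \<Rightarrow> real \<Rightarrow> real \<Rightarrow> real \<Rightarrow> real \<Rightarrow> real \<Rightarrow> real \<Rightarrow> real \<Rightarrow> real" where
  "WmF \<kappa> \<kappa>3 m3 m2 m1 z p1 p2 p3 = (1-\<kappa>)/4*(3*z - 3*m1 + m2 - p1)
      - \<kappa>3/16*((p2 - 2*z + m2) - (p1 - 2*m1 + m3))"
definition PfF :: "real \<Rightarrow> (real \<Rightarrow> real) \<Rightarrow> real \<Rightarrow> real \<Rightarrow> real \<Rightarrow> real \<Rightarrow> real \<Rightarrow> real" where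
  "PfF \<theta> f m2 m1 z p1 p2 = (f p1 - f m1)/2 + (1-\<theta>)/8*(2*deriv f z*(p1 - m1)
      - deriv f p1*(p2 - z) - deriv f m1*(z - m2))"
definition PdF where
  "PdF \<kappa> \<kappa>3 Dbar m3 m2 m1 z p1 p2 p3 = - (Dbar z p1 * WpF \<kappa> \<kappa>3 m3 m2 m1 z p1 p2 p3 - Dbar m1 z * WmF \<kappa> \<kappa>3 m3 m2 m1 z p1 p2 p3)/2"

lemma ux_h: "h \<noteq> 0 \<Longrightarrow> h/2 * ux U h i = (U(i+1) - U(i-1))/4"
  unfolding ux_def by (simp add: field_simps)
lemma TL_eq: "h \<noteq> 0 \<Longrightarrow> TL U h i = (U(i+2) - U i - U(i+1) + U(i-1))/8 - (U(i+2) - 2*U i + U(i-2))/16"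
  unfolding TL_def uxx_def ux_def by (simp add: field_simps power2_eq_square)
lemma TR_eq: "h \<noteq> 0 \<Longrightarrow> TR U h i = (U(i+2) - U i - U(i+1) + U(i-1))/8 - (U(i+3) - 2*U(i+1) + U(i-1))/16"
  unfolding TR_def uxx_def ux_def by (simp add: field_simps power2_eq_square)
lemma uL_eq: assumes h: "h \<noteq> 0" shows "uL \<kappa> \<kappa>3 U h i = \<kappa> * (U i + U (i+1)) / 2 + (1 - \<kappa>) * (U i + (U(i+1) - U(i-1))/4)
   + \<kappa>3 * ((U(i+2) - U i - U(i+1) + U(i-1))/8 - (U(i+2) - 2*U i + U(i-2))/16)"
  unfolding uL_def by (simp only: ux_h[OF h] TL_eq[OF h])
lemma uR_eq: assumes h: "h \<noteq> 0" shows "uR \<kappa> \<kappa>3 U h i = \<kappa> * (U i + U (i+1)) / 2 + (1 - \<kappa>) * (U (i+1) - (U(i+2) - U i)/4)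
   + \<kappa>3 * ((U(i+2) - U i - U(i+1) + U(i-1))/8 - (U(i+3) - 2*U(i+1) + U(i-1))/16)"
  unfolding uR_def by (simp only: ux_h[OF h] TR_eq[OF h]) (simp add: add.commute)
lemma fL_eq: assumes h: "h \<noteq> 0" shows "fL \<theta> f U h i = \<theta> * (f (U i) + f (U (i+1))) / 2
      + (1 - \<theta>) * (f (U i) + deriv f (U i) * ((U(i+1) - U(i-1))/4))"
  unfolding fL_def mult.assoc by (simp only: ux_h[OF h])
lemma fR_eq: assumes h: "h \<noteq> 0" shows "fR \<theta> f U h i = \<theta> * (f (U i) + f (U (i+1))) / 2
      + (1 - \<theta>) * (f (U (i+1)) - deriv f (U (i+1)) * ((U(i+2) - U i)/4))"
  unfolding fR_def mult.assoc by (simp only: ux_h[OF h]) (simp add: add.commute)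

lemma Phi_diff:
  assumes "h \<noteq> 0"
  shows "Phi \<kappa> \<kappa>3 \<theta> f Dbar U h 0 - Phi \<kappa> \<kappa>3 \<theta> f Dbar U h (-1)
     = PfF \<theta> f (U (-2)) (U (-1)) (U 0) (U 1) (U 2) + PdF \<kappa> \<kappa>3 Dbar (U (-3)) (U (-2)) (U (-1)) (U 0) (U 1) (U 2) (U 3)"
  unfolding Phi_def using assms
  apply (simp add: uL_eq uR_eq fL_eq fR_eq)
  apply (simp add: PfF_def PdF_def WpF_def WmF_def)
  apply (simp add: field_simps)
  done

lemma err_eq:
  assumes "h \<noteq> 0"
  shows "CFSR_err \<kappa> \<kappa>3 \<theta> f Dbar u x h
     = (PfF \<theta> f (u (x - 2*h)) (u (x - h)) (u x) (u (x + h)) (u (x + 2*h))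
       + PdF \<kappa> \<kappa>3 Dbar (u (x - 3*h)) (u (x - 2*h)) (u (x - h)) (u x) (u (x + h)) (u (x + 2*h)) (u (x + 3*h))) / h"
  unfolding CFSR_err_def Let_def Phi_diff[OF assms] by (simp add: algebra_simps)

locale S2 =
  fixes S :: "(real \<Rightarrow> real \<Rightarrow> real) set"
  assumes S: "\<And>k. k \<in> S \<Longrightarrow> continuous_on UNIV (\<lambda>p. k (fst p) (snd p)) \<and>
      (\<forall>a b. (\<lambda>s. k s b) differentiable (at a) \<and> (\<lambda>t. k a t) differentiable (at b)) \<and>
      (\<lambda>a b. deriv (\<lambda>s. k s b) a) \<in> S \<and> (\<lambda>a b. deriv (\<lambda>t. k a t) b) \<in> S"
begin

lemma iter: "k \<in> S \<Longrightarrow> (\<lambda>a b. (deriv^^n) (\<lambda>t. k a t) b) \<in> S"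
proof (induction n)
  case 0 then show ?case by simp
next
  case (Suc n)
  then have "(\<lambda>a b. deriv (\<lambda>t. (\<lambda>a b. (deriv^^n) (\<lambda>t. k a t) b) a t) b) \<in> S" using S by blast
  then show ?case by simp
qed

lemma partial_smooth1: "k \<in> S \<Longrightarrow> smooth1 (\<lambda>t. k a t)"
  unfolding smooth1_def
proof (intro allI)
  fix n b assume k: "k \<in> S"
  have "(\<lambda>t. (\<lambda>a b. (deriv^^n) (\<lambda>t. k a t) b) a t) differentiable (at b)"
    using S[OF iter[OF k]] by blast
  then show "(deriv^^n) (\<lambda>t. k a t) differentiable (at b)" by simp
qed

end

lemma smooth2_S: assumes "smooth2 Dbar" obtains S where "S2 S" "Dbar \<in> S"
proof -
  from assms obtain S where "Dbar \<in> S" and P: "\<forall>k\<in>S. continuous_on UNIV (\<lambda>p. k (fst p) (snd p)) \<and>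
      (\<forall>a b. (\<lambda>s. k s b) differentiable (at a) \<and> (\<lambda>t. k a t) differentiable (at b)) \<and>
      (\<lambda>a b. deriv (\<lambda>s. k s b) a) \<in> S \<and> (\<lambda>a b. deriv (\<lambda>t. k a t) b) \<in> S"
    unfolding smooth2_def by (elim exE conjE)
  have "S2 S" unfolding S2_def using P by (intro allI impI) (erule bspec)
  then show ?thesis using that \<open>Dbar \<in> S\<close> by blast
qed

lemma smooth2_partial: assumes "smooth2 Dbar" shows "smooth1 (Dbar a)"
proof -
  obtain S where "S2 S" "Dbar \<in> S" using smooth2_S[OF assms] .
  from S2.partial_smooth1[OF this, of a] show ?thesis by simp
qed

lemma D_deriv:
  assumes D2: "smooth2 Dbar" and sym: "\<And>a b. Dbar a b = Dbar b a"
    and dd: "\<And>v. Dbar v v = D v" and D: "smooth1 D"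
  shows "deriv D a = 2 * deriv (Dbar a) a"
proof -
  obtain S where S2: "S2 S" and DS: "Dbar \<in> S" using smooth2_S[OF D2] by blast
  define k2 where "k2 = (\<lambda>a b. deriv (\<lambda>t. Dbar a t) b)"
  have k2S: "k2 \<in> S" unfolding k2_def using S2.S[OF S2 DS] by blast
  have k2c: "isCont (\<lambda>p. k2 (fst p) (snd p)) (a, a)"
    using S2.S[OF S2 k2S] by (simp add: continuous_on_eq_continuous_at)
  have sm: "smooth1 (Dbar b)" for b using smooth2_partial[OF D2] .
  have ex: "\<exists>\<xi>. \<bar>\<xi> - a\<bar> \<le> \<bar>t\<bar> \<and> Dbar (a+t) (a+t) - Dbar (a+t) a = t * k2 (a+t) \<xi>" for t
  proof (cases "t = 0")
    case True then show ?thesis by (intro exI[of _ a]) simp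
  next
    case False
    have "\<exists>\<xi>. (if a + t < a then a + t < \<xi> \<and> \<xi> < a else a < \<xi> \<and> \<xi> < a + t) \<and>
        Dbar (a+t) (a+t) = (\<Sum>m<1. ((deriv^^m) (Dbar (a+t)) a / fact m) * (a + t - a)^m)
          + ((deriv^^1) (Dbar (a+t)) \<xi> / fact 1) * (a + t - a)^1"
      apply (rule Taylor[of 1 "\<lambda>m. (deriv^^m) (Dbar (a+t))" "Dbar (a+t)" "min a (a+t)" "max a (a+t)" a "a+t"])
      using False by (auto simp: min_def max_def intro: smooth1_DERIVn[OF sm, simplified] smooth1_DERIV[OF sm])
    then obtain \<xi> where "(if a + t < a then a + t < \<xi> \<and> \<xi> < a else a < \<xi> \<and> \<xi> < a + t)"
      and "Dbar (a+t) (a+t) = Dbar (a+t) a + deriv (Dbar (a+t)) \<xi> * t" by auto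
    then show ?thesis unfolding k2_def
      by (intro exI[of _ \<xi>]) (auto split: if_splits simp: mult.commute)
  qed
  have ex': "\<forall>t. \<exists>\<xi>. \<bar>\<xi> - a\<bar> \<le> \<bar>t\<bar> \<and> Dbar (a+t) (a+t) - Dbar (a+t) a = t * k2 (a+t) \<xi>"
    using ex by (intro allI)
  from choice[OF ex'] obtain \<xi> where
    xi0: "\<forall>t. \<bar>\<xi> t - a\<bar> \<le> \<bar>t\<bar> \<and> Dbar (a+t) (a+t) - Dbar (a+t) a = t * k2 (a+t) (\<xi> t)"
    by (elim exE)
  have xi: "\<And>t. \<bar>\<xi> t - a\<bar> \<le> \<bar>t\<bar>"
    "\<And>t. Dbar (a+t) (a+t) - Dbar (a+t) a = t * k2 (a+t) (\<xi> t)" using xi0 by auto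
  have "((\<lambda>t. \<xi> t - a) \<longlongrightarrow> 0) (at 0)"
    by (rule tendsto_0_le[OF tendsto_ident_at[of 0 UNIV], of _ 1]) (simp add: xi(1))
  then have xil: "(\<xi> \<longlongrightarrow> a) (at 0)" by (rule LIM_zero_cancel)
  have "((\<lambda>t. (a + t, \<xi> t)) \<longlongrightarrow> (a, a)) (at 0)"
    by (intro tendsto_Pair xil) (auto intro!: tendsto_eq_intros)
  from isCont_tendsto_compose[OF k2c this]
  have l1: "((\<lambda>t. k2 (a + t) (\<xi> t)) \<longlongrightarrow> k2 a a) (at 0)" by simp
  have l2: "((\<lambda>t. (Dbar a (a + t) - Dbar a a) / t) \<longlongrightarrow> k2 a a) (at 0)"
    using smooth1_DERIV[OF sm[of a], of a] unfolding DERIV_def k2_def by simp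
  have l3: "((\<lambda>t. k2 (a + t) (\<xi> t) + (Dbar a (a + t) - Dbar a a) / t) \<longlongrightarrow> k2 a a + k2 a a) (at 0)"
    by (intro tendsto_add l1 l2)
  have ev: "\<forall>\<^sub>F t in at 0. k2 (a + t) (\<xi> t) + (Dbar a (a + t) - Dbar a a) / t = (D (a + t) - D a) / t"
  proof -
    have "\<forall>\<^sub>F t in at (0::real). t \<noteq> 0" by (simp add: eventually_at_filter)
    then show ?thesis
    proof (rule eventually_mono)
      fix t :: real assume t: "t \<noteq> 0"
      have "D (a + t) - D a = (Dbar (a+t) (a+t) - Dbar (a+t) a) + (Dbar a (a + t) - Dbar a a)"
        using dd[of "a+t"] dd[of a] sym[of "a+t" a] by simp
      then have "D (a + t) - D a = t * k2 (a + t) (\<xi> t) + (Dbar a (a + t) - Dbar a a)"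
        using xi(2)[of t] by simp
      then have "(D (a + t) - D a) / t = t * k2 (a + t) (\<xi> t) / t + (Dbar a (a + t) - Dbar a a) / t"
        by (simp add: add_divide_distrib)
      then show "k2 (a + t) (\<xi> t) + (Dbar a (a + t) - Dbar a a) / t = (D (a + t) - D a) / t"
        using t by simp
    qed
  qed
  have l4: "((\<lambda>t. (D (a + t) - D a) / t) \<longlongrightarrow> k2 a a + k2 a a) (at 0)"
    using tendsto_cong[OF ev] l3 by simp
  have l5: "((\<lambda>t. (D (a + t) - D a) / t) \<longlongrightarrow> deriv D a) (at 0)"
    using smooth1_DERIV[OF D, of a] unfolding DERIV_def by simp
  have "deriv D a = k2 a a + k2 a a" using tendsto_unique[OF _ l5 l4] by simp
  then show ?thesis unfolding k2_def by simp
qed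

lemma sum_lt5: "(\<Sum>k<(5::nat). F k) = F 0 + F 1 + F 2 + F 3 + F 4"
  by (simp add: eval_nat_numeral)
lemma sum_lt4: "(\<Sum>k<(4::nat). F k) = F 0 + F 1 + F 2 + F 3"
  by (simp add: eval_nat_numeral)
lemma sum_lt2: "(\<Sum>k<(2::nat). F k) = F 0 + F 1"
  by (simp add: eval_nat_numeral)
lemma fact_vals: "fact 2 = (2::real)" "fact 3 = (6::real)" "fact 4 = (24::real)"
  by (simp_all add: eval_nat_numeral)

lemma taylor5:
  assumes "smooth1 g"
  shows "Ob 5 (\<lambda>h. g (x + c*h) - (g x + deriv g x * (c*h) + (deriv^^2) g x / 2 * (c*h)^2
      + (deriv^^3) g x / 6 * (c*h)^3 + (deriv^^4) g x / 24 * (c*h)^4))"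
  using taylor_Ob[OF assms, of 5 x c] unfolding sum_lt5 by (simp add: fact_vals)

lemma taylor4:
  assumes "smooth1 g"
  shows "Ob 4 (\<lambda>h. g (x + c*h) - (g x + deriv g x * (c*h) + (deriv^^2) g x / 2 * (c*h)^2
      + (deriv^^3) g x / 6 * (c*h)^3))"
  using taylor_Ob[OF assms, of 4 x c] unfolding sum_lt4 by (simp add: fact_vals)

lemma taylor2:
  assumes "smooth1 g"
  shows "Ob 2 (\<lambda>h. g (x + c*h) - (g x + deriv g x * (c*h)))"
  using taylor_Ob[OF assms, of 2 x c] unfolding sum_lt2 by simp

lemma taylor1:
  assumes "smooth1 g"
  shows "Ob 1 (\<lambda>h. g (x + c*h) - g x)"
  using taylor_Ob[OF assms, of 1 x c] by simp

lemma Ob_poly0: "isCont p 0 \<Longrightarrow> Ob n (\<lambda>h. h^n * p h)"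
  using Ob_mult[OF Ob_pow[of n] Ob_cont[of p]] by simp

lemma flux_Ob:
  fixes G1 Gm Q1 Qm U1 Um U2 Um2 :: "real \<Rightarrow> real"
    and u0 a1 a2 a3 a4 q0 q1 q2 q3 g1 g3 \<theta> :: real
  defines "P \<equiv> \<lambda>c h. u0 + a1*(c*h) + a2/2*(c*h)^2 + a3/6*(c*h)^3 + a4/24*(c*h)^4"
  assumes hG: "Ob 5 (\<lambda>h. G1 h - Gm h - (2*g1*h + g3/3*h^3))"
    and hQ1: "Ob 4 (\<lambda>h. Q1 h - (q0 + q1*h + q2/2*h^2 + q3/6*h^3))"
    and hQm: "Ob 4 (\<lambda>h. Qm h - (q0 - q1*h + q2/2*h^2 - q3/6*h^3))"
    and hU1: "Ob 5 (\<lambda>h. U1 h - P 1 h)" and hUm: "Ob 5 (\<lambda>h. Um h - P (-1) h)"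
    and hU2: "Ob 5 (\<lambda>h. U2 h - P 2 h)" and hUm2: "Ob 5 (\<lambda>h. Um2 h - P (-2) h)"
    and d1: "Ob 1 (\<lambda>h. U2 h - u0)" and dm: "Ob 1 (\<lambda>h. u0 - Um2 h)"
    and g3: "g3 = q2*a1 + 2*q1*a2 + q0*a3"
  shows "Ob 5 (\<lambda>h. (G1 h - Gm h)/2 + (1-\<theta>)/8*(2*q0*(U1 h - Um h) - Q1 h*(U2 h - u0) - Qm h*(u0 - Um2 h))
     - h * (g1 + (3*\<theta>-1)/12*g3*h^2))"
proof -
  define Q1p where "Q1p = (\<lambda>h::real. q0 + q1*h + q2/2*h^2 + q3/6*h^3)"
  define Qmp where "Qmp = (\<lambda>h::real. q0 - q1*h + q2/2*h^2 - q3/6*h^3)"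
  define QQ where "QQ = (\<lambda>h::real. -(2/3*a2*q3 + 4/3*a3*q2 + 4/3*a4*q1) - 2/9*h^2*a4*q3)"
  have eq: "(G1 h - Gm h)/2 + (1-\<theta>)/8*(2*q0*(U1 h - Um h) - Q1 h*(U2 h - u0) - Qm h*(u0 - Um2 h))
     - h * (g1 + (3*\<theta>-1)/12*g3*h^2)
    = (1/2)*(G1 h - Gm h - (2*g1*h + g3/3*h^3))
      + (1-\<theta>)/8*(2*q0*((U1 h - P 1 h) - (Um h - P (-1) h))
          - ((Q1 h - Q1p h)*(U2 h - u0) + Q1p h*(U2 h - P 2 h))
          - ((Qm h - Qmp h)*(u0 - Um2 h) - Qmp h*(Um2 h - P (-2) h)))
      + (1-\<theta>)/8*(h^5 * QQ h)" for h
    unfolding P_def Q1p_def Qmp_def QQ_def g3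
    by (simp add: field_simps power2_eq_square power3_eq_cube power4_eq_xxxx eval_nat_numeral)
  have c1: "isCont Q1p 0" "isCont Qmp 0" "isCont QQ 0" unfolding Q1p_def Qmp_def QQ_def by (auto intro!: continuous_intros)
  have r1: "Ob 5 (\<lambda>h. (Q1 h - Q1p h)*(U2 h - u0))" using Ob_mult[OF hQ1 d1] by (simp add: Q1p_def)
  have r2: "Ob 5 (\<lambda>h. Q1p h * (U2 h - P 2 h))" using Ob_mult[OF Ob_cont[OF c1(1)] hU2] by simp
  have r3: "Ob 5 (\<lambda>h. (Qm h - Qmp h)*(u0 - Um2 h))" using Ob_mult[OF hQm dm] by (simp add: Qmp_def)
  have r4: "Ob 5 (\<lambda>h. Qmp h * (Um2 h - P (-2) h))" using Ob_mult[OF Ob_cont[OF c1(2)] hUm2] by simp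
  have r5: "Ob 5 (\<lambda>h. h^5 * QQ h)" using Ob_poly0[OF c1(3)] .
  show ?thesis
    by (rule Ob_cong[OF _ eq]) (intro Ob_add Ob_diff Ob_cmult hG hU1 hUm r1 r2 r3 r4 r5)
qed

lemma diss_Ob:
  fixes Dp Dm Wp Wm :: "real \<Rightarrow> real" and D0 \<beta> s a3 a4 :: real
  assumes hDp: "Ob 2 (\<lambda>h. Dp h - (D0 + \<beta>*h))" and hDm: "Ob 2 (\<lambda>h. Dm h - (D0 - \<beta>*h))"
    and hWp: "Ob 5 (\<lambda>h. Wp h - (-(s/4))*(a3*h^3 + a4/2*h^4))"
    and hWm: "Ob 5 (\<lambda>h. Wm h - (-(s/4))*(a3*h^3 - a4/2*h^4))"
  shows "Ob 5 (\<lambda>h. -(Dp h * Wp h - Dm h * Wm h)/2 - h*(s/8*(2*\<beta>*a3 + D0*a4)*h^3))"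
proof -
  define Wpp where "Wpp = (\<lambda>h::real. (-(s/4))*(a3*h^3 + a4/2*h^4))"
  define Wmp where "Wmp = (\<lambda>h::real. (-(s/4))*(a3*h^3 - a4/2*h^4))"
  have eq: "-(Dp h * Wp h - Dm h * Wm h)/2 - h*(s/8*(2*\<beta>*a3 + D0*a4)*h^3)
     = -(1/2)*(((D0 + \<beta>*h)*(Wp h - Wpp h) + (Dp h - (D0 + \<beta>*h))*Wp h)
               - ((D0 - \<beta>*h)*(Wm h - Wmp h) + (Dm h - (D0 - \<beta>*h))*Wm h))" for h
    unfolding Wpp_def Wmp_def by (simp add: field_simps power2_eq_square power3_eq_cube power4_eq_xxxx eval_nat_numeral)
  have c: "isCont (\<lambda>h. D0 + \<beta>*h) 0" "isCont (\<lambda>h. D0 - \<beta>*h) 0"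
    "isCont (\<lambda>h. (-(s/4))*(a3 + a4/2*h)) 0" "isCont (\<lambda>h. (-(s/4))*(a3 - a4/2*h)) 0"
    by (auto intro!: continuous_intros)
  have Wp3: "Ob 3 Wp"
  proof -
    have "Ob 3 (\<lambda>h. h^3 * ((-(s/4))*(a3 + a4/2*h)))" by (rule Ob_poly0[OF c(3)])
    moreover have "Ob 3 (\<lambda>h. Wp h - (-(s/4))*(a3*h^3 + a4/2*h^4))" using Ob_mono[OF hWp] by simp
    ultimately have "Ob 3 (\<lambda>h. (Wp h - (-(s/4))*(a3*h^3 + a4/2*h^4)) + h^3 * ((-(s/4))*(a3 + a4/2*h)))"
      by (intro Ob_add)
    then show ?thesis by (rule Ob_cong) (simp add: algebra_simps power3_eq_cube power4_eq_xxxx)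
  qed
  have Wm3: "Ob 3 Wm"
  proof -
    have "Ob 3 (\<lambda>h. h^3 * ((-(s/4))*(a3 - a4/2*h)))" by (rule Ob_poly0[OF c(4)])
    moreover have "Ob 3 (\<lambda>h. Wm h - (-(s/4))*(a3*h^3 - a4/2*h^4))" using Ob_mono[OF hWm] by simp
    ultimately have "Ob 3 (\<lambda>h. (Wm h - (-(s/4))*(a3*h^3 - a4/2*h^4)) + h^3 * ((-(s/4))*(a3 - a4/2*h)))"
      by (intro Ob_add)
    then show ?thesis by (rule Ob_cong) (simp add: algebra_simps power3_eq_cube power4_eq_xxxx)
  qed
  have r1: "Ob 5 (\<lambda>h. (D0 + \<beta>*h)*(Wp h - Wpp h))" using Ob_mult[OF Ob_cont[OF c(1)] hWp] by (simp add: Wpp_def)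
  have r2: "Ob 5 (\<lambda>h. (Dp h - (D0 + \<beta>*h))*Wp h)" using Ob_mult[OF hDp Wp3] by simp
  have r3: "Ob 5 (\<lambda>h. (D0 - \<beta>*h)*(Wm h - Wmp h))" using Ob_mult[OF Ob_cont[OF c(2)] hWm] by (simp add: Wmp_def)
  have r4: "Ob 5 (\<lambda>h. (Dm h - (D0 - \<beta>*h))*Wm h)" using Ob_mult[OF hDm Wm3] by simp
  show ?thesis
    by (rule Ob_cong[OF _ eq]) (intro Ob_add Ob_diff Ob_cmult r1 r2 r3 r4)
qed

lemma W_Ob:
  fixes U1 Um U2 Um2 U3 Um3 :: "real \<Rightarrow> real" and u0 a1 a2 a3 a4 \<kappa> \<kappa>3 :: real
  defines "P \<equiv> \<lambda>c h. u0 + a1*(c*h) + a2/2*(c*h)^2 + a3/6*(c*h)^3 + a4/24*(c*h)^4"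
  assumes hU1: "Ob 5 (\<lambda>h. U1 h - P 1 h)" and hUm: "Ob 5 (\<lambda>h. Um h - P (-1) h)"
    and hU2: "Ob 5 (\<lambda>h. U2 h - P 2 h)" and hUm2: "Ob 5 (\<lambda>h. Um2 h - P (-2) h)"
    and hU3: "Ob 5 (\<lambda>h. U3 h - P 3 h)" and hUm3: "Ob 5 (\<lambda>h. Um3 h - P (-3) h)"
  shows "Ob 5 (\<lambda>h. WpF \<kappa> \<kappa>3 (Um3 h) (Um2 h) (Um h) u0 (U1 h) (U2 h) (U3 h)
            - (-((1-\<kappa>+\<kappa>3)/4))*(a3*h^3 + a4/2*h^4))"
    and "Ob 5 (\<lambda>h. WmF \<kappa> \<kappa>3 (Um3 h) (Um2 h) (Um h) u0 (U1 h) (U2 h) (U3 h)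
            - (-((1-\<kappa>+\<kappa>3)/4))*(a3*h^3 - a4/2*h^4))"
proof -
  have eq1: "WpF \<kappa> \<kappa>3 (Um3 h) (Um2 h) (Um h) u0 (U1 h) (U2 h) (U3 h) - (-((1-\<kappa>+\<kappa>3)/4))*(a3*h^3 + a4/2*h^4)
    = (1-\<kappa>)/4*(3*(U1 h - P 1 h) + (Um h - P (-1) h) - (U2 h - P 2 h))
      - \<kappa>3/16*(((U3 h - P 3 h) - 2*(U1 h - P 1 h) + (Um h - P (-1) h)) - ((U2 h - P 2 h) + (Um2 h - P (-2) h)))" for h
    unfolding P_def WpF_def by (simp add: field_simps power2_eq_square power3_eq_cube power4_eq_xxxx eval_nat_numeral)
  have eq2: "WmF \<kappa> \<kappa>3 (Um3 h) (Um2 h) (Um h) u0 (U1 h) (U2 h) (U3 h) - (-((1-\<kappa>+\<kappa>3)/4))*(a3*h^3 - a4/2*h^4)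
    = (1-\<kappa>)/4*(- 3*(Um h - P (-1) h) + (Um2 h - P (-2) h) - (U1 h - P 1 h))
      - \<kappa>3/16*(((U2 h - P 2 h) + (Um2 h - P (-2) h)) - ((U1 h - P 1 h) - 2*(Um h - P (-1) h) + (Um3 h - P (-3) h)))" for h
    unfolding P_def WmF_def by (simp add: field_simps power2_eq_square power3_eq_cube power4_eq_xxxx eval_nat_numeral)
  show "Ob 5 (\<lambda>h. WpF \<kappa> \<kappa>3 (Um3 h) (Um2 h) (Um h) u0 (U1 h) (U2 h) (U3 h)
            - (-((1-\<kappa>+\<kappa>3)/4))*(a3*h^3 + a4/2*h^4))"
    by (rule Ob_cong[OF _ eq1]) (intro Ob_add Ob_diff Ob_cmult Ob_uminus hU1 hUm hU2 hUm2 hU3 hUm3)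
  show "Ob 5 (\<lambda>h. WmF \<kappa> \<kappa>3 (Um3 h) (Um2 h) (Um h) u0 (U1 h) (U2 h) (U3 h)
            - (-((1-\<kappa>+\<kappa>3)/4))*(a3*h^3 - a4/2*h^4))"
    by (rule Ob_cong[OF _ eq2]) (intro Ob_add Ob_diff Ob_cmult Ob_uminus hU1 hUm hU2 hUm2 hU3 hUm3)
qed

lemma deriv_chain_s: "smooth1 f \<Longrightarrow> smooth1 u \<Longrightarrow> deriv (\<lambda>y. f (u y)) x = deriv f (u x) * deriv u x"
  by (rule DERIV_imp_deriv, rule DERIV_chain2) (auto intro: smooth1_DERIV)

lemma g3_id:
  assumes sf: "smooth1 f" and su: "smooth1 u"
  shows "(deriv^^3) (\<lambda>y. f (u y)) x = (deriv^^2) (\<lambda>y. deriv f (u y)) x * deriv u x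
     + 2 * deriv (\<lambda>y. deriv f (u y)) x * (deriv^^2) u x + deriv f (u x) * (deriv^^3) u x"
proof -
  define q where "q = (\<lambda>y. deriv f (u y))"
  have sq: "smooth1 q" unfolding q_def by (rule smooth1_comp[OF smooth1_deriv[OF sf] su])
  have su1: "smooth1 (deriv u)" by (rule smooth1_deriv[OF su])
  have sq1: "smooth1 (deriv q)" by (rule smooth1_deriv[OF sq])
  have su2: "smooth1 (deriv (deriv u))" by (rule smooth1_deriv[OF su1])
  have d1: "deriv (\<lambda>y. f (u y)) = (\<lambda>y. q y * deriv u y)"
    unfolding q_def by (rule ext, rule deriv_chain_s[OF sf su])
  have d2: "deriv (\<lambda>y. q y * deriv u y) = (\<lambda>y. deriv q y * deriv u y + q y * deriv (deriv u) y)"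
  proof (rule ext)
    fix y
    have "deriv (\<lambda>y. q y * deriv u y) y = deriv q y * deriv u y + deriv (deriv u) y * q y"
      by (rule DERIV_imp_deriv, rule DERIV_mult[OF smooth1_DERIV[OF sq] smooth1_DERIV[OF su1]])
    then show "deriv (\<lambda>y. q y * deriv u y) y = deriv q y * deriv u y + q y * deriv (deriv u) y"
      by (simp add: mult.commute)
  qed
  have d3: "deriv (\<lambda>y. deriv q y * deriv u y + q y * deriv (deriv u) y) x
     = (deriv (deriv q) x * deriv u x + deriv q x * deriv (deriv u) x)
       + (deriv q x * deriv (deriv u) x + q x * deriv (deriv (deriv u)) x)"
  proof -
    have "deriv (\<lambda>y. deriv q y * deriv u y + q y * deriv (deriv u) y) x
     = (deriv (deriv q) x * deriv u x + deriv (deriv u) x * deriv q x)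
       + (deriv q x * deriv (deriv u) x + deriv (deriv (deriv u)) x * q x)"
      by (rule DERIV_imp_deriv, rule DERIV_add, rule DERIV_mult[OF smooth1_DERIV[OF sq1] smooth1_DERIV[OF su1]],
        rule DERIV_mult[OF smooth1_DERIV[OF sq] smooth1_DERIV[OF su2]])
    then show ?thesis by (simp add: mult.commute)
  qed
  have e3: "(deriv^^3) F = deriv (deriv (deriv F))" for F :: "real \<Rightarrow> real"
    by (simp add: numeral_3_eq_3)
  have e2: "(deriv^^2) F = deriv (deriv F)" for F :: "real \<Rightarrow> real"
    by (simp add: numeral_2_eq_2)
  have "(deriv^^3) (\<lambda>y. f (u y)) x = (deriv (deriv q) x * deriv u x + deriv q x * deriv (deriv u) x)
       + (deriv q x * deriv (deriv u) x + q x * deriv (deriv (deriv u)) x)"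
    unfolding e3 d1 d2 d3 ..
  then show ?thesis unfolding e3 e2 q_def[symmetric] by (simp add: q_def)
qed

lemma err_div:
  fixes A B T1 T2 h :: real
  assumes "h \<noteq> 0"
  shows "(A + B)/h - (T1 + T2) = ((A - h*T1) + (B - h*T2))/h"
  using assms by (simp add: field_simps)

lemma main_Ob:
  fixes u f D :: "real \<Rightarrow> real" and Dbar :: "real \<Rightarrow> real \<Rightarrow> real"
    and \<kappa> \<kappa>3 \<theta> x :: real
  assumes su: "smooth1 u" and sf: "smooth1 f" and sD: "smooth1 D" and s2: "smooth2 Dbar"
    and sym: "\<And>a b. Dbar a b = Dbar b a" and dd: "\<And>v. Dbar v v = D v"
  shows "Ob 4 (\<lambda>h. CFSR_err \<kappa> \<kappa>3 \<theta> f Dbar u x h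
        - (deriv (f \<circ> u) x + (3*\<theta> - 1) / 12 * (deriv ^^ 3) (f \<circ> u) x * h^2
           + (1-\<kappa>+\<kappa>3)/8 * (deriv (D \<circ> u) x * (deriv ^^ 3) u x + D (u x) * (deriv ^^ 4) u x) * h^3))"
proof -
  define g where "g = (\<lambda>y. f (u y))"
  define q where "q = (\<lambda>y. deriv f (u y))"
  define \<psi> where "\<psi> = (\<lambda>y. Dbar (u x) (u y))"
  have sg: "smooth1 g" unfolding g_def by (rule smooth1_comp[OF sf su])
  have sq: "smooth1 q" unfolding q_def by (rule smooth1_comp[OF smooth1_deriv[OF sf] su])
  have sp: "smooth1 \<psi>" unfolding \<psi>_def by (rule smooth1_comp[OF smooth2_partial[OF s2] su])
  define \<beta> where "\<beta> = deriv \<psi> x"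
  have \<beta>: "deriv (D \<circ> u) x = 2 * \<beta>"
  proof -
    have "deriv (D \<circ> u) x = deriv D (u x) * deriv u x" unfolding o_def by (rule deriv_chain_s[OF sD su])
    also have "\<dots> = 2 * (deriv (Dbar (u x)) (u x) * deriv u x)" using D_deriv[OF s2 sym dd sD, of "u x"] by simp
    also have "deriv (Dbar (u x)) (u x) * deriv u x = \<beta>" unfolding \<beta>_def \<psi>_def
      by (rule deriv_chain_s[OF smooth2_partial[OF s2] su, symmetric])
    finally show ?thesis .
  qed
  have D0: "D (u x) = \<psi> x" unfolding \<psi>_def using dd by simp
  have fu: "f \<circ> u = g" unfolding g_def o_def ..
  have g3: "(deriv^^3) g x = (deriv^^2) q x * deriv u x + 2 * deriv q x * (deriv^^2) u x + q x * (deriv^^3) u x"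
    unfolding g_def q_def by (rule g3_id[OF sf su])
  have tU: "\<And>c. Ob 5 (\<lambda>h. u (x + c*h) - (u x + deriv u x * (c*h) + (deriv^^2) u x / 2 * (c*h)^2
      + (deriv^^3) u x / 6 * (c*h)^3 + (deriv^^4) u x / 24 * (c*h)^4))"
    by (rule taylor5[OF su])
  have hG: "Ob 5 (\<lambda>h. g (x + 1*h) - g (x + -1*h) - (2 * deriv g x * h + (deriv^^3) g x / 3 * h^3))"
  proof -
    have "Ob 5 (\<lambda>h. (g (x + 1*h) - (g x + deriv g x * (1*h) + (deriv^^2) g x / 2 * (1*h)^2
      + (deriv^^3) g x / 6 * (1*h)^3 + (deriv^^4) g x / 24 * (1*h)^4))
       - (g (x + -1*h) - (g x + deriv g x * (-1*h) + (deriv^^2) g x / 2 * (-1*h)^2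
      + (deriv^^3) g x / 6 * (-1*h)^3 + (deriv^^4) g x / 24 * (-1*h)^4)))"
      by (intro Ob_diff taylor5[OF sg])
    then show ?thesis by (rule Ob_cong) (simp add: field_simps power2_eq_square power3_eq_cube power4_eq_xxxx)
  qed
  have hQ1: "Ob 4 (\<lambda>h. q (x + 1*h) - (q x + deriv q x * h + (deriv^^2) q x / 2 * h^2 + (deriv^^3) q x / 6 * h^3))"
    by (rule Ob_cong[OF taylor4[OF sq, of x 1]]) simp
  have hQm: "Ob 4 (\<lambda>h. q (x + -1*h) - (q x - deriv q x * h + (deriv^^2) q x / 2 * h^2 - (deriv^^3) q x / 6 * h^3))"
    by (rule Ob_cong[OF taylor4[OF sq, of x "-1"]]) (simp add: field_simps power2_eq_square power3_eq_cube)
  have d1: "Ob 1 (\<lambda>h. u (x + 2*h) - u x)" by (rule taylor1[OF su])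
  have dm: "Ob 1 (\<lambda>h. u x - u (x + -2*h))"
    by (rule Ob_cong[OF Ob_uminus[OF taylor1[OF su, of x "-2"]]]) simp
  have F: "Ob 5 (\<lambda>h. (g (x + 1*h) - g (x + -1*h))/2 + (1-\<theta>)/8*(2*q x*(u (x + 1*h) - u (x + -1*h))
        - q (x + 1*h)*(u (x + 2*h) - u x) - q (x + -1*h)*(u x - u (x + -2*h)))
     - h * (deriv g x + (3*\<theta>-1)/12*(deriv^^3) g x*h^2))"
    by (rule flux_Ob[OF hG hQ1 hQm tU[of 1] tU[of "-1"] tU[of 2] tU[of "-2"] d1 dm g3])
  have hDp: "Ob 2 (\<lambda>h. \<psi> (x + 1*h) - (\<psi> x + \<beta>*h))"
    by (rule Ob_cong[OF taylor2[OF sp, of x 1]]) (simp add: \<beta>_def)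
  have hDm: "Ob 2 (\<lambda>h. \<psi> (x + -1*h) - (\<psi> x - \<beta>*h))"
    by (rule Ob_cong[OF taylor2[OF sp, of x "-1"]]) (simp add: \<beta>_def)
  have Dd: "Ob 5 (\<lambda>h. -(\<psi> (x + 1*h) * WpF \<kappa> \<kappa>3 (u (x + -3*h)) (u (x + -2*h)) (u (x + -1*h)) (u x) (u (x + 1*h)) (u (x + 2*h)) (u (x + 3*h))
         - \<psi> (x + -1*h) * WmF \<kappa> \<kappa>3 (u (x + -3*h)) (u (x + -2*h)) (u (x + -1*h)) (u x) (u (x + 1*h)) (u (x + 2*h)) (u (x + 3*h)))/2
       - h*((1-\<kappa>+\<kappa>3)/8*(2*\<beta>*(deriv^^3) u x + \<psi> x*(deriv^^4) u x)*h^3))"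
    by (rule diss_Ob[OF hDp hDm W_Ob(1)[OF tU[of 1] tU[of "-1"] tU[of 2] tU[of "-2"] tU[of 3] tU[of "-3"]]
                             W_Ob(2)[OF tU[of 1] tU[of "-1"] tU[of 2] tU[of "-2"] tU[of 3] tU[of "-3"]]])
  have S: "Ob 4 (\<lambda>h. (((g (x + 1*h) - g (x + -1*h))/2 + (1-\<theta>)/8*(2*q x*(u (x + 1*h) - u (x + -1*h))
        - q (x + 1*h)*(u (x + 2*h) - u x) - q (x + -1*h)*(u x - u (x + -2*h)))
     - h * (deriv g x + (3*\<theta>-1)/12*(deriv^^3) g x*h^2))
     + (-(\<psi> (x + 1*h) * WpF \<kappa> \<kappa>3 (u (x + -3*h)) (u (x + -2*h)) (u (x + -1*h)) (u x) (u (x + 1*h)) (u (x + 2*h)) (u (x + 3*h))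
         - \<psi> (x + -1*h) * WmF \<kappa> \<kappa>3 (u (x + -3*h)) (u (x + -2*h)) (u (x + -1*h)) (u x) (u (x + 1*h)) (u (x + 2*h)) (u (x + 3*h)))/2
       - h*((1-\<kappa>+\<kappa>3)/8*(2*\<beta>*(deriv^^3) u x + \<psi> x*(deriv^^4) u x)*h^3))) / h)"
    by (rule Ob_div5[OF Ob_add[OF F Dd]])
  show ?thesis
  proof (rule Ob_cong[OF S])
    fix h :: real assume h: "0 < h"
    have pf: "PfF \<theta> f (u (x - 2*h)) (u (x - h)) (u x) (u (x + h)) (u (x + 2*h))
       = (g (x + 1*h) - g (x + -1*h))/2 + (1-\<theta>)/8*(2*q x*(u (x + 1*h) - u (x + -1*h))
        - q (x + 1*h)*(u (x + 2*h) - u x) - q (x + -1*h)*(u x - u (x + -2*h)))"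
      unfolding PfF_def g_def q_def by simp
    have sy: "Dbar (u (x - h)) (u x) = Dbar (u x) (u (x - h))" by (rule sym)
    have pd: "PdF \<kappa> \<kappa>3 Dbar (u (x - 3*h)) (u (x - 2*h)) (u (x - h)) (u x) (u (x + h)) (u (x + 2*h)) (u (x + 3*h))
       = -(\<psi> (x + 1*h) * WpF \<kappa> \<kappa>3 (u (x + -3*h)) (u (x + -2*h)) (u (x + -1*h)) (u x) (u (x + 1*h)) (u (x + 2*h)) (u (x + 3*h))
         - \<psi> (x + -1*h) * WmF \<kappa> \<kappa>3 (u (x + -3*h)) (u (x + -2*h)) (u (x + -1*h)) (u x) (u (x + 1*h)) (u (x + 2*h)) (u (x + 3*h)))/2"
      unfolding PdF_def \<psi>_def sy by simp
    show "CFSR_err \<kappa> \<kappa>3 \<theta> f Dbar u x h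
        - (deriv (f \<circ> u) x + (3*\<theta> - 1) / 12 * (deriv ^^ 3) (f \<circ> u) x * h^2
           + (1-\<kappa>+\<kappa>3)/8 * (deriv (D \<circ> u) x * (deriv ^^ 3) u x + D (u x) * (deriv ^^ 4) u x) * h^3)
        = (((g (x + 1*h) - g (x + -1*h))/2 + (1-\<theta>)/8*(2*q x*(u (x + 1*h) - u (x + -1*h))
        - q (x + 1*h)*(u (x + 2*h) - u x) - q (x + -1*h)*(u x - u (x + -2*h)))
     - h * (deriv g x + (3*\<theta>-1)/12*(deriv^^3) g x*h^2))
     + (-(\<psi> (x + 1*h) * WpF \<kappa> \<kappa>3 (u (x + -3*h)) (u (x + -2*h)) (u (x + -1*h)) (u x) (u (x + 1*h)) (u (x + 2*h)) (u (x + 3*h))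
         - \<psi> (x + -1*h) * WmF \<kappa> \<kappa>3 (u (x + -3*h)) (u (x + -2*h)) (u (x + -1*h)) (u x) (u (x + 1*h)) (u (x + 2*h)) (u (x + 3*h)))/2
       - h*((1-\<kappa>+\<kappa>3)/8*(2*\<beta>*(deriv^^3) u x + \<psi> x*(deriv^^4) u x)*h^3))) / h"
      unfolding err_eq[of h, OF less_imp_neq[OF h, symmetric]] pf pd fu \<beta> D0
      by (rule err_div) (use h in simp)
  qed
qed

theorem mainTheorem5:
  fixes u f D :: "real \<Rightarrow> real" and Dbar :: "real \<Rightarrow> real \<Rightarrow> real"
    and \<kappa> \<kappa>3 \<theta> x :: real
  assumes "smooth1 u" and "smooth1 f" and "smooth1 D" and "smooth2 Dbar"
    and "\<And>a b. Dbar a b = Dbar b a"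
    and "\<And>v. Dbar v v = D v"
  shows "(\<kappa>3 = 0 \<longrightarrow>
           (\<lambda>h. CFSR_err \<kappa> \<kappa>3 \<theta> f Dbar u x h
               - (deriv (f \<circ> u) x
                  + (3*\<theta> - 1) / 12 * (deriv ^^ 3) (f \<circ> u) x * h^2
                  - (\<kappa> - 1) / 8 * (deriv (D \<circ> u) x * (deriv ^^ 3) u x
                                    + D (u x) * (deriv ^^ 4) u x) * h^3))
           \<in> O[at_right 0](\<lambda>h. h^4))
       \<and> (\<theta> = 1/3 \<and> \<kappa>3 = \<kappa> - 1 \<longrightarrow>
           (\<lambda>h. CFSR_err \<kappa> \<kappa>3 \<theta> f Dbar u x h - deriv (f \<circ> u) x)
           \<in> O[at_right 0](\<lambda>h. h^4))"
proof (intro conjI impI)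
  note M = main_Ob[OF assms, of \<kappa> \<kappa>3 \<theta> x]
  assume k3: "\<kappa>3 = 0"
  show "(\<lambda>h. CFSR_err \<kappa> \<kappa>3 \<theta> f Dbar u x h
               - (deriv (f \<circ> u) x
                  + (3*\<theta> - 1) / 12 * (deriv ^^ 3) (f \<circ> u) x * h^2
                  - (\<kappa> - 1) / 8 * (deriv (D \<circ> u) x * (deriv ^^ 3) u x
                                    + D (u x) * (deriv ^^ 4) u x) * h^3))
           \<in> O[at_right 0](\<lambda>h. h^4)"
    by (rule Ob_bigo, rule Ob_cong[OF M]) (simp add: k3 field_simps)
next
  note M = main_Ob[OF assms, of \<kappa> \<kappa>3 \<theta> x]
  assume th: "\<theta> = 1/3 \<and> \<kappa>3 = \<kappa> - 1"
  show "(\<lambda>h. CFSR_err \<kappa> \<kappa>3 \<theta> f Dbar u x h - deriv (f \<circ> u) x) \<in> O[at_right 0](\<lambda>h. h^4)"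
    by (rule Ob_bigo, rule Ob_cong[OF M]) (simp add: th)
qed

end
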